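(* Let $A \in \mathbb{C}^{m \times p}$, $y \in \mathbb{C}^{m}$, patch-extraction operators $P_1,\dots,P_N \in \{0,1\}^{n \times p}$, and $\nu,\eta,C>0$. Let $$g(W,B,x) = \nu\|Ax-y\|_2^2 + \varphi(W) + \chi(x) + \sum_{j=1}^N \left\{ \|W P_j x - b_j\|_2^2 + \eta^2 \|b_j\|_0\right\},$$ with $\varphi(W)=0$ if $W^HW=I$ and $+\infty$ otherwise, $\chi(x)=0$ if $\|x\|_2\le C$ and $+\infty$ otherwise. Algorithm A1 (described in the context) is globally convergent (i.e., from any initialization) to a subset of the set of critical points of $g$; this subset includes all critical points $(W,B,x)$ that are at least partial global minimizers of $g$ with respect to each of $W$, $B$, and $x$, and partial local minimizers of $g$ with respect to $(B,x)$.
   Context: $B=[b_1|\cdots|b_N]\in\mathbb{C}^{n\times N}$; $\|b\|_0$ counts nonzeros. A critical point is a generalized stationary point of $g$ ($0$ in the limiting subdifferential). Partial local minimizer with respect to $(B,x)$ means $g(W,B+\Delta B,x+\Delta x)\ge g(W,B,x)$ for all $\Delta x\in\mathbb{C}^p$ and all $\Delta B$ with $\max_{i,j}|\Delta B_{ij}|<\eta/2$. $H_\eta$ is entrywise hard thresholding: $(H_\eta(\alpha))_i=0$ if $|\alpha_i|<\eta$, $=\alpha_i$ if $|\alpha_i|\ge\eta$. Algorithm A1: for $t=1,2,\dots$, with exact computations: (1) with $X=[P_1x^{t-1}|\cdots|P_Nx^{t-1}]$ and full SVD $X(B^{t-1})^H=U\Sigma V^H$, set $W^t=VU^H$; (2)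 $b_j^t=H_\eta(W^tP_jx^{t-1})$ for all $j$; (3) $x^t$ is a global minimizer of $\nu\|Ax-y\|_2^2+\sum_j\|W^tP_jx-b_j^t\|_2^2$ subject to $\|x\|_2\le C$. *)

theory Defs
  imports "HOL-Analysis.Analysis"
begin

text \<open>Complex matrices are represented as \<open>complex^'c^'r\<close> (r rows, c columns);
  all dimensions are fixed but arbitrary finite index types. The joint variable space
  \<open>complex^'n^'n \<times> complex^'N^'n \<times> complex^'p\<close> is a real Euclidean space
  (complex entries viewed as R^2), with inner product Re of the Hermitian one.\<close>

definition adj :: "complex^'c^'r \<Rightarrow> complex^'r^'c" where
  "adj M = (\<chi> i j. cnj (M$j$i))"

definition col :: "'a^'c^'r \<Rightarrow> 'c \<Rightarrow> 'a^'r" where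
  "col M j = (\<chi> i. M$i$j)"

definition l0 :: "complex^'n \<Rightarrow> nat" where
  "l0 b = card {i. b$i \<noteq> 0}"

definition hard_thr :: "real \<Rightarrow> complex^'n \<Rightarrow> complex^'n" where
  "hard_thr eta a = (\<chi> i. if cmod (a$i) < eta then 0 else a$i)"

definition patch_op :: "complex^'p^'n \<Rightarrow> bool" where
  "patch_op P \<longleftrightarrow> (\<forall>i k. P$i$k = 0 \<or> P$i$k = 1) \<and> (\<forall>i. \<exists>!k. P$i$k = 1)"

definition phi :: "complex^'n^'n \<Rightarrow> ereal" where
  "phi W = (if adj W ** W = mat 1 then 0 else \<infinity>)"

definition chi :: "real \<Rightarrow> complex^'p \<Rightarrow> ereal" where
  "chi C x = (if norm x \<le> C then 0 else \<infinity>)"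

definition gobj :: "real \<Rightarrow> real \<Rightarrow> real \<Rightarrow> complex^'p^'m \<Rightarrow> complex^'m \<Rightarrow>
    ('N \<Rightarrow> complex^'p^'n) \<Rightarrow> complex^'n^'n \<Rightarrow> complex^'N^'n \<Rightarrow> complex^'p \<Rightarrow> ereal" where
  "gobj nu eta C A y P W B x =
     ereal (nu * (norm (A *v x - y))\<^sup>2) + phi W + chi C x
     + ereal (\<Sum>j\<in>UNIV. (norm (W *v (P j *v x) - col B j))\<^sup>2 + eta\<^sup>2 * real (l0 (col B j)))"

definition frechet_subdiff :: "('a::euclidean_space \<Rightarrow> ereal) \<Rightarrow> 'a \<Rightarrow> 'a set" where
  "frechet_subdiff f z = {v. \<bar>f z\<bar> \<noteq> \<infinity> \<and>
     (\<forall>e>0. \<exists>d>0. \<forall>u. norm (u - z) < d \<longrightarrow>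
        f u \<ge> f z + ereal (inner v (u - z) - e * norm (u - z)))}"

definition limiting_subdiff :: "('a::euclidean_space \<Rightarrow> ereal) \<Rightarrow> 'a \<Rightarrow> 'a set" where
  "limiting_subdiff f z = {v. \<bar>f z\<bar> \<noteq> \<infinity> \<and>
     (\<exists>zs vs. zs \<longlonglongrightarrow> z \<and> (\<lambda>k. f (zs k)) \<longlonglongrightarrow> f z \<and>
        (\<forall>k. vs k \<in> frechet_subdiff f (zs k)) \<and> vs \<longlonglongrightarrow> v)}"

definition critical_point :: "('a::euclidean_space \<Rightarrow> ereal) \<Rightarrow> 'a \<Rightarrow> bool" where
  "critical_point f z \<longleftrightarrow> 0 \<in> limiting_subdiff f z"

definition full_svd :: "complex^'n^'n \<Rightarrow> complex^'n^'n \<Rightarrow> complex^'n^'n \<Rightarrow> complex^'n^'n \<Rightarrow> bool" where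
  "full_svd M U S V \<longleftrightarrow> adj U ** U = mat 1 \<and> adj V ** V = mat 1 \<and>
     (\<forall>i j. i \<noteq> j \<longrightarrow> S$i$j = 0) \<and> (\<forall>i. S$i$i \<in> \<real> \<and> Re (S$i$i) \<ge> 0) \<and>
     M = U ** S ** adj V"

definition patch_mat :: "('N \<Rightarrow> complex^'p^'n) \<Rightarrow> complex^'p \<Rightarrow> complex^'N^'n" where
  "patch_mat P x = (\<chi> i j. (P j *v x)$i)"

text \<open>Sequences (Ws, Bs, xs) generated by Algorithm A1 from the arbitrary
  initialization (Ws 0, Bs 0, xs 0); every admissible choice (SVD, minimizer) allowed.\<close>
definition alg_A1 :: "real \<Rightarrow> real \<Rightarrow> real \<Rightarrow> complex^'p^'m \<Rightarrow> complex^'m \<Rightarrow>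
    ('N \<Rightarrow> complex^'p^'n) \<Rightarrow> (nat \<Rightarrow> complex^'n^'n) \<Rightarrow> (nat \<Rightarrow> complex^'N^'n) \<Rightarrow>
    (nat \<Rightarrow> complex^'p) \<Rightarrow> bool" where
  "alg_A1 nu eta C A y P Ws Bs xs \<longleftrightarrow>
    (\<forall>t. (\<exists>U S V. full_svd (patch_mat P (xs t) ** adj (Bs t)) U S V \<and> Ws (Suc t) = V ** adj U)
      \<and> (\<forall>j. col (Bs (Suc t)) j = hard_thr eta (Ws (Suc t) *v (P j *v xs t)))
      \<and> norm (xs (Suc t)) \<le> C
      \<and> (\<forall>x'. norm x' \<le> C \<longrightarrow>
           nu * (norm (A *v xs (Suc t) - y))\<^sup>2
             + (\<Sum>j\<in>UNIV. (norm (Ws (Suc t) *v (P j *v xs (Suc t)) - col (Bs (Suc t)) j))\<^sup>2)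
           \<le> nu * (norm (A *v x' - y))\<^sup>2
             + (\<Sum>j\<in>UNIV. (norm (Ws (Suc t) *v (P j *v x') - col (Bs (Suc t)) j))\<^sup>2)))"

definition good_points :: "real \<Rightarrow> real \<Rightarrow> real \<Rightarrow> complex^'p^'m \<Rightarrow> complex^'m \<Rightarrow>
    ('N \<Rightarrow> complex^'p^'n) \<Rightarrow> ((complex^'n^'n) \<times> (complex^'N^'n) \<times> (complex^'p)) set" where
  "good_points nu eta C A y P =
    {(W, B, x). critical_point (\<lambda>(W', B', x'). gobj nu eta C A y P W' B' x') (W, B, x)
       \<and> (\<forall>W'. gobj nu eta C A y P W B x \<le> gobj nu eta C A y P W' B x)
       \<and> (\<forall>B'. gobj nu eta C A y P W B x \<le> gobj nu eta C A y P W B' x)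
       \<and> (\<forall>x'. gobj nu eta C A y P W B x \<le> gobj nu eta C A y P W B x')
       \<and> (\<forall>dB dx. (\<forall>i j. cmod (dB$i$j) < eta / 2) \<longrightarrow>
             gobj nu eta C A y P W B x \<le> gobj nu eta C A y P W (B + dB) (x + dx))}"

end

theory Submission imports Defs begin

definition ci :: "complex^'n \<Rightarrow> complex^'n \<Rightarrow> complex" where
  "ci a b = (\<Sum>i\<in>UNIV. a$i * cnj (b$i))"

lemma inner_complex_eq: "inner (z::complex) w = Re (z * cnj w)"
  by (simp add: inner_complex_def)

lemma inner_ci: "inner a b = Re (ci a b)"
  by (simp add: inner_vec_def ci_def inner_complex_eq)

lemma ci_adj: "ci (M *v a) b = ci a (adj M *v b)"
proof -
  have "ci (M *v a) b = (\<Sum>i\<in>UNIV. \<Sum>k\<in>UNIV. M$i$k * a$k * cnj (b$i))"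
    by (simp add: ci_def matrix_vector_mult_def sum_distrib_right)
  also have "\<dots> = (\<Sum>k\<in>UNIV. \<Sum>i\<in>UNIV. M$i$k * a$k * cnj (b$i))"
    by (rule sum.swap)
  also have "\<dots> = ci a (adj M *v b)"
    by (simp add: ci_def matrix_vector_mult_def adj_def sum_distrib_left mult_ac)
  finally show ?thesis .
qed

lemma adj_mult: "adj (A ** B) = adj B ** adj A"
  by (simp add: adj_def matrix_matrix_mult_def vec_eq_iff mult.commute)

lemma adj_adj[simp]: "adj (adj A) = A"
  by (simp add: adj_def vec_eq_iff)

lemma unitary_right: fixes V :: "complex^'n^'n"
  assumes "adj V ** V = mat 1" shows "V ** adj V = mat 1"
  using assms matrix_left_right_inverse by blast

lemma ci_unitary: assumes "adj W ** W = mat 1" shows "ci (W *v a) (W *v b) = ci a b"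
  by (simp add: ci_adj matrix_vector_mul_assoc assms)

lemma inner_unitary: assumes "adj W ** W = mat 1" shows "inner (W *v a) (W *v b) = inner a b"
  by (simp add: inner_ci ci_unitary assms)

lemma norm_unitary: assumes "adj W ** W = mat 1" shows "norm (W *v a) = norm a"
  by (simp add: norm_eq_sqrt_inner inner_unitary assms)

lemma norm_diff_sq: "(norm (a - b))\<^sup>2 = (norm a)\<^sup>2 + (norm b)\<^sup>2 - 2 * inner a b"
  by (simp add: power2_norm_eq_inner inner_diff_left inner_diff_right inner_commute)

lemma norm_add_sq: "(norm (a + b))\<^sup>2 = (norm a)\<^sup>2 + (norm b)\<^sup>2 + 2 * inner a b"
  by (simp add: power2_norm_eq_inner inner_add_left inner_add_right inner_commute)

definition tr :: "complex^'n^'n \<Rightarrow> complex" where "tr M = (\<Sum>i\<in>UNIV. M$i$i)"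

lemma tr_comm: "tr (A ** B) = tr (B ** A)"
proof -
  have "tr (A ** B) = (\<Sum>i\<in>UNIV. \<Sum>k\<in>UNIV. A$i$k * B$k$i)"
    by (simp add: tr_def matrix_matrix_mult_def)
  also have "\<dots> = (\<Sum>k\<in>UNIV. \<Sum>i\<in>UNIV. A$i$k * B$k$i)" by (rule sum.swap)
  also have "\<dots> = tr (B ** A)"
    by (simp add: tr_def matrix_matrix_mult_def mult.commute)
  finally show ?thesis .
qed

lemma ci_tr: "(\<Sum>j\<in>UNIV. ci (W *v (P j *v x)) (col B j)) = tr (W ** patch_mat P x ** adj B)"
proof -
  have "tr (W ** patch_mat P x ** adj B) = (\<Sum>i\<in>UNIV. \<Sum>j\<in>UNIV. (W ** patch_mat P x)$i$j * cnj (B$i$j))"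
    by (simp add: tr_def matrix_matrix_mult_def adj_def)
  also have "\<dots> = (\<Sum>j\<in>UNIV. \<Sum>i\<in>UNIV. (W ** patch_mat P x)$i$j * cnj (B$i$j))"
    by (rule sum.swap)
  also have "\<dots> = (\<Sum>j\<in>UNIV. ci (W *v (P j *v x)) (col B j))"
    by (simp add: ci_def col_def matrix_matrix_mult_def matrix_vector_mult_def patch_mat_def)
  finally show ?thesis by simp
qed

lemma unitary_entry_le1: fixes Q :: "complex^'n^'n"
  assumes "adj Q ** Q = mat 1" shows "cmod (Q$i$i) \<le> 1"
proof -
  have "(adj Q ** Q)$i$i = 1" using assms by (simp add: mat_def)
  hence "(\<Sum>k\<in>UNIV. cnj (Q$k$i) * Q$k$i) = 1"
    by (simp add: matrix_matrix_mult_def adj_def)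
  moreover have "\<And>k. cnj (Q$k$i) * Q$k$i = of_real ((cmod (Q$k$i))\<^sup>2)"
    by (simp only: complex_norm_square[symmetric] mult.commute[of "cnj _"] norm_eq_sqrt_inner) 
  ultimately have "of_real (\<Sum>k\<in>UNIV. (cmod (Q$k$i))\<^sup>2) = (1::complex)"
    by (simp add: of_real_sum)
  hence s: "(\<Sum>k\<in>UNIV. (cmod (Q$k$i))\<^sup>2) = 1"
    using of_real_eq_1_iff by blast
  have "(cmod (Q$i$i))\<^sup>2 \<le> (\<Sum>k\<in>UNIV. (cmod (Q$k$i))\<^sup>2)"
    by (rule member_le_sum) auto
  hence "(cmod (Q$i$i))\<^sup>2 \<le> 1\<^sup>2" using s by simp
  thus ?thesis by (rule power2_le_imp_le) simp
qed


lemma unitary_entry_le1': fixes Q :: "complex^'n^'n"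
  assumes "adj Q ** Q = mat 1" shows "cmod (Q$k$i) \<le> 1"
proof -
  have "(adj Q ** Q)$i$i = 1" using assms by (simp add: mat_def)
  hence "(\<Sum>k\<in>UNIV. cnj (Q$k$i) * Q$k$i) = 1"
    by (simp add: matrix_matrix_mult_def adj_def)
  moreover have "\<And>k. cnj (Q$k$i) * Q$k$i = of_real ((cmod (Q$k$i))\<^sup>2)"
    by (simp only: complex_norm_square[symmetric] mult.commute[of "cnj _"])
  ultimately have "of_real (\<Sum>k\<in>UNIV. (cmod (Q$k$i))\<^sup>2) = (1::complex)"
    by (simp add: of_real_sum)
  hence s: "(\<Sum>k\<in>UNIV. (cmod (Q$k$i))\<^sup>2) = 1"
    using of_real_eq_1_iff by blast
  have "(cmod (Q$k$i))\<^sup>2 \<le> (\<Sum>k\<in>UNIV. (cmod (Q$k$i))\<^sup>2)"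
    by (rule member_le_sum) auto
  hence "(cmod (Q$k$i))\<^sup>2 \<le> 1\<^sup>2" using s by simp
  thus ?thesis by (rule power2_le_imp_le) simp
qed

lemma tr_diag: assumes "\<forall>i j. i \<noteq> j \<longrightarrow> S$i$j = 0"
  shows "tr (Q ** S) = (\<Sum>i\<in>UNIV. Q$i$i * S$i$i)"
proof -
  have "\<And>i. (\<Sum>k\<in>UNIV. Q$i$k * S$k$i) = Q$i$i * S$i$i"
  proof -
    fix i
    have "(\<Sum>k\<in>UNIV. Q$i$k * S$k$i) = Q$i$i * S$i$i + (\<Sum>k\<in>UNIV-{i}. Q$i$k * S$k$i)"
      by (rule sum.remove) auto
    also have "(\<Sum>k\<in>UNIV-{i}. Q$i$k * S$k$i) = 0"
      by (rule sum.neutral) (use assms in auto)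
    finally show "(\<Sum>k\<in>UNIV. Q$i$k * S$k$i) = Q$i$i * S$i$i" by simp
  qed
  thus ?thesis by (simp add: tr_def matrix_matrix_mult_def)
qed

lemma unitary_mult: fixes A B :: "complex^'n^'n"
  assumes "adj A ** A = mat 1" "adj B ** B = mat 1" shows "adj (A ** B) ** (A ** B) = mat 1"
proof -
  have "adj (A ** B) ** (A ** B) = adj B ** ((adj A ** A) ** B)"
    by (simp add: adj_mult matrix_mul_assoc)
  thus ?thesis using assms by simp
qed

lemma adj_unitary: fixes A :: "complex^'n^'n"
  assumes "adj A ** A = mat 1" shows "adj (adj A) ** adj A = mat 1"
  using unitary_right[OF assms] by simp

lemma procrustes_tr:
  fixes M W U S V :: "complex^'n^'n"
  assumes svd: "full_svd M U S V" and W: "adj W ** W = mat 1"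
  shows "Re (tr (W ** M)) \<le> Re (tr ((V ** adj U) ** M))"
proof -
  from svd have U: "adj U ** U = mat 1" and V: "adj V ** V = mat 1"
    and Sd: "\<forall>i j. i \<noteq> j \<longrightarrow> S$i$j = 0" and Sr: "\<forall>i. S$i$i \<in> \<real> \<and> Re (S$i$i) \<ge> 0"
    and M: "M = U ** S ** adj V" by (auto simp: full_svd_def)
  have trx: "tr (X ** M) = tr ((adj V ** X ** U) ** S)" for X
  proof -
    have "tr (X ** M) = tr ((X ** U ** S) ** adj V)" by (simp add: M matrix_mul_assoc)
    also have "\<dots> = tr (adj V ** (X ** U ** S))" by (rule tr_comm)
    also have "\<dots> = tr ((adj V ** X ** U) ** S)" by (simp add: matrix_mul_assoc)
    finally show ?thesis .
  qed
  define Q where "Q = adj V ** W ** U"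
  have Qu: "adj Q ** Q = mat 1" unfolding Q_def
    by (intro unitary_mult adj_unitary V W U)
  have "Re (tr (W ** M)) = (\<Sum>i\<in>UNIV. Re (Q$i$i * S$i$i))"
    by (simp add: trx tr_diag[OF Sd] Q_def)
  also have "\<dots> \<le> (\<Sum>i\<in>UNIV. Re (S$i$i))"
  proof (rule sum_mono)
    fix i
    obtain r where r: "S$i$i = of_real r" "r \<ge> 0" using Sr by (metis Reals_cases Re_complex_of_real)
    have "Re (Q$i$i * S$i$i) = Re (Q$i$i) * r" by (simp add: r)
    also have "\<dots> \<le> cmod (Q$i$i) * r" using r(2) by (simp add: complex_Re_le_cmod mult_right_mono)
    also have "\<dots> \<le> r" using unitary_entry_le1[OF Qu, of i] r(2) by (simp add: mult_left_le_one_le)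
    finally show "Re (Q$i$i * S$i$i) \<le> Re (S$i$i)" by (simp add: r)
  qed
  also have "\<dots> = Re (tr ((V ** adj U) ** M))"
  proof -
    have "adj V ** (V ** adj U) ** U = mat 1"
      by (metis V U unitary_right matrix_mul_assoc matrix_mul_lid)
    thus ?thesis by (simp add: trx tr_diag[OF Sd] mat_def)
  qed
  finally show ?thesis .
qed

lemma sum_norm_expand: fixes W :: "complex^'n^'n"
  assumes "adj W ** W = mat 1"
  shows "(\<Sum>j\<in>UNIV. (norm (W *v (P j *v x) - col B j))\<^sup>2)
    = (\<Sum>j\<in>UNIV. (norm (P j *v x))\<^sup>2 + (norm (col B j))\<^sup>2)
      - 2 * Re (tr ((W ** patch_mat P x) ** adj B))"
proof -
  have "(\<Sum>j\<in>UNIV. (norm (W *v (P j *v x) - col B j))\<^sup>2)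
     = (\<Sum>j\<in>UNIV. (norm (P j *v x))\<^sup>2 + (norm (col B j))\<^sup>2 - 2 * inner (W *v (P j *v x)) (col B j))"
    by (simp add: norm_diff_sq norm_unitary[OF assms])
  also have "\<dots> = (\<Sum>j\<in>UNIV. (norm (P j *v x))\<^sup>2 + (norm (col B j))\<^sup>2)
      - 2 * (\<Sum>j\<in>UNIV. Re (ci (W *v (P j *v x)) (col B j)))"
    by (simp add: sum_subtractf sum_distrib_left inner_ci)
  also have "(\<Sum>j\<in>UNIV. Re (ci (W *v (P j *v x)) (col B j))) = Re (tr ((W ** patch_mat P x) ** adj B))"
    by (simp add: ci_tr[symmetric])
  finally show ?thesis .
qed

lemma procrustes:
  fixes W U S V :: "complex^'n^'n"
  assumes svd: "full_svd (patch_mat P x ** adj B) U S V" and W: "adj W ** W = mat 1"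
  shows "(\<Sum>j\<in>UNIV. (norm ((V ** adj U) *v (P j *v x) - col B j))\<^sup>2)
       \<le> (\<Sum>j\<in>UNIV. (norm (W *v (P j *v x) - col B j))\<^sup>2)"
    and "adj (V ** adj U) ** (V ** adj U) = mat 1"
proof -
  from svd have U: "adj U ** U = mat 1" and V: "adj V ** V = mat 1" by (auto simp: full_svd_def)
  show W0: "adj (V ** adj U) ** (V ** adj U) = mat 1"
    by (intro unitary_mult adj_unitary V U)
  have "Re (tr (W ** (patch_mat P x ** adj B))) \<le> Re (tr ((V ** adj U) ** (patch_mat P x ** adj B)))"
    by (rule procrustes_tr[OF svd W])
  thus "(\<Sum>j\<in>UNIV. (norm ((V ** adj U) *v (P j *v x) - col B j))\<^sup>2)
       \<le> (\<Sum>j\<in>UNIV. (norm (W *v (P j *v x) - col B j))\<^sup>2)"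
    by (simp add: sum_norm_expand[OF W] sum_norm_expand[OF W0] matrix_mul_assoc)
qed


lemma mv_scaleR: fixes A :: "complex^'n^'m" shows "A *v (c *\<^sub>R x) = c *\<^sub>R (A *v x)"
  using linear_iff matrix_vector_mul_linear by blast

lemma col_add: "col (B + D) j = col B j + col D j"
  by (simp add: col_def vec_eq_iff)
lemma col_diff: "col (B - D) j = col B j - col D j"
  by (simp add: col_def vec_eq_iff)
lemma col_scaleR: "col (c *\<^sub>R D) j = c *\<^sub>R col D j"
  by (simp add: col_def vec_eq_iff)

definition Qf :: "real \<Rightarrow> complex^'p^'m \<Rightarrow> complex^'m \<Rightarrow> ('N::finite \<Rightarrow> complex^'p^'n) \<Rightarrow>
   complex^'n^'n \<Rightarrow> complex^'N^'n \<Rightarrow> complex^'p \<Rightarrow> real" where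
  "Qf nu A y P W B x = nu * (norm (A *v x - y))\<^sup>2 + (\<Sum>j\<in>UNIV. (norm (W *v (P j *v x) - col B j))\<^sup>2)"

definition Lf :: "complex^'N^'n \<Rightarrow> real" where
  "Lf B = (\<Sum>j\<in>UNIV. real (l0 (col B j)))"

lemma gobj_eq: "gobj nu eta C A y P W B x =
  (if adj W ** W = mat 1 \<and> norm x \<le> C then ereal (Qf nu A y P W B x + eta\<^sup>2 * Lf B) else \<infinity>)"
proof -
  have "(\<Sum>j\<in>UNIV. (norm (W *v (P j *v x) - col B j))\<^sup>2 + eta\<^sup>2 * real (l0 (col B j)))
     = (\<Sum>j\<in>UNIV. (norm (W *v (P j *v x) - col B j))\<^sup>2) + eta\<^sup>2 * Lf B"
    by (simp add: sum.distrib sum_distrib_left Lf_def)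
  thus ?thesis by (simp add: gobj_def phi_def chi_def Qf_def)
qed

definition linQ :: "real \<Rightarrow> complex^'p^'m \<Rightarrow> complex^'m \<Rightarrow> ('N::finite \<Rightarrow> complex^'p^'n) \<Rightarrow>
   complex^'n^'n \<Rightarrow> complex^'N^'n \<Rightarrow> complex^'p \<Rightarrow> complex^'N^'n \<Rightarrow> complex^'p \<Rightarrow> real" where
  "linQ nu A y P W B x dB dx = 2 * nu * inner (A *v x - y) (A *v dx)
     + (\<Sum>j\<in>UNIV. 2 * inner (W *v (P j *v x) - col B j) (W *v (P j *v dx) - col dB j))"

definition quadQ :: "real \<Rightarrow> complex^'p^'m \<Rightarrow> ('N::finite \<Rightarrow> complex^'p^'n) \<Rightarrow>
   complex^'n^'n \<Rightarrow> complex^'N^'n \<Rightarrow> complex^'p \<Rightarrow> real" where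
  "quadQ nu A P W dB dx = nu * (norm (A *v dx))\<^sup>2
     + (\<Sum>j\<in>UNIV. (norm (W *v (P j *v dx) - col dB j))\<^sup>2)"

lemma Qf_expand: "Qf nu A y P W (B + dB) (x + dx) = Qf nu A y P W B x + linQ nu A y P W B x dB dx + quadQ nu A P W dB dx"
proof -
  have e1: "A *v (x + dx) - y = (A *v x - y) + A *v dx" by (simp add: matrix_vector_right_distrib)
  have e2: "W *v (P j *v (x + dx)) - col (B + dB) j = (W *v (P j *v x) - col B j) + (W *v (P j *v dx) - col dB j)" for j
    by (simp add: matrix_vector_right_distrib col_add)
  show ?thesis unfolding Qf_def linQ_def quadQ_def e1 e2 norm_add_sq
    by (simp add: sum.distrib distrib_left)
qed

lemma linQ_scale: "linQ nu A y P W B x (c *\<^sub>R dB) (c *\<^sub>R dx) = c * linQ nu A y P W B x dB dx"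
proof -
  have e: "W *v (P j *v (c *\<^sub>R dx)) - col (c *\<^sub>R dB) j = c *\<^sub>R (W *v (P j *v dx) - col dB j)" for j
    by (simp add: mv_scaleR col_scaleR scaleR_diff_right)
  show ?thesis unfolding linQ_def e by (simp add: mv_scaleR sum_distrib_left distrib_left mult_ac)
qed

lemma quadQ_scale: "quadQ nu A P W (c *\<^sub>R dB) (c *\<^sub>R dx) = c\<^sup>2 * quadQ nu A P W dB dx"
proof -
  have e: "W *v (P j *v (c *\<^sub>R dx)) - col (c *\<^sub>R dB) j = c *\<^sub>R (W *v (P j *v dx) - col dB j)" for j
    by (simp add: mv_scaleR col_scaleR scaleR_diff_right)
  show ?thesis unfolding quadQ_def e by (simp add: mv_scaleR sum_distrib_left distrib_left power_mult_distrib mult_ac)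
qed

lemma quadQ_nonneg: "nu \<ge> 0 \<Longrightarrow> quadQ nu A P W dB dx \<ge> 0"
  by (simp add: quadQ_def sum_nonneg)

lemma lin_nonneg_real:
  fixes l q :: real
  assumes "\<And>s. 0 < s \<Longrightarrow> s \<le> 1 \<Longrightarrow> 0 \<le> s * l + s\<^sup>2 * q"
  shows "0 \<le> l"
proof (rule ccontr)
  assume "\<not> 0 \<le> l"
  hence l: "l < 0" by simp
  define s where "s = - l / (\<bar>q\<bar> - l)"
  have s0: "0 < s" unfolding s_def using l by (intro divide_pos_pos) auto
  have s1: "s \<le> 1" unfolding s_def using l by (subst divide_le_eq_1) auto
  have "0 \<le> s * (l + s * q)" using assms[OF s0 s1] by (simp add: power2_eq_square algebra_simps)
  hence "0 \<le> l + s * q" using s0 by (simp add: zero_le_mult_iff)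
  moreover have "s * q \<le> s * \<bar>q\<bar>" using s0 by (simp add: mult_left_mono)
  moreover have "l + s * \<bar>q\<bar> < 0"
  proof -
    have "l + s * \<bar>q\<bar> = (l * (\<bar>q\<bar> - l) - l * \<bar>q\<bar>) / (\<bar>q\<bar> - l)"
      using l by (simp add: s_def field_simps)
    also have "\<dots> = - (l * l) / (\<bar>q\<bar> - l)" by (simp add: algebra_simps)
    also have "\<dots> < 0" using l by (intro divide_neg_pos) (auto simp: mult_neg_neg)
    finally show ?thesis .
  qed
  ultimately show False by linarith
qed

lemma x_opt_lin:
  assumes opt: "\<forall>x'. norm x' \<le> C \<longrightarrow> Qf nu A y P W B x \<le> Qf nu A y P W B x'"
    and xC: "norm x \<le> C" and zC: "norm z \<le> C"
  shows "0 \<le> linQ nu A y P W B x 0 (z - x)"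
proof (rule lin_nonneg_real)
  fix s :: real assume s: "0 < s" "s \<le> 1"
  have "norm (x + s *\<^sub>R (z - x)) \<le> C"
  proof -
    have "x + s *\<^sub>R (z - x) = (1 - s) *\<^sub>R x + s *\<^sub>R z" by (simp add: algebra_simps)
    also have "norm \<dots> \<le> (1 - s) * norm x + s * norm z"
      using s norm_triangle_ineq[of "(1 - s) *\<^sub>R x" "s *\<^sub>R z"] by simp
    also have "\<dots> \<le> (1 - s) * C + s * C" using s xC zC by (intro add_mono mult_left_mono) auto
    finally show ?thesis by (simp add: algebra_simps)
  qed
  hence "Qf nu A y P W B x \<le> Qf nu A y P W (B + s *\<^sub>R 0) (x + s *\<^sub>R (z - x))" using opt by simp
  also have "\<dots> = Qf nu A y P W B x + s * linQ nu A y P W B x 0 (z - x) + s\<^sup>2 * quadQ nu A P W 0 (z - x)"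
    by (simp only: Qf_expand linQ_scale quadQ_scale)
  finally show "0 \<le> s * linQ nu A y P W B x 0 (z - x) + s\<^sup>2 * quadQ nu A P W 0 (z - x)" by simp
qed


lemma x_opt_quad:
  assumes opt: "\<forall>x'. norm x' \<le> C \<longrightarrow> Qf nu A y P W B x \<le> Qf nu A y P W B x'"
    and xC: "norm x \<le> C" and zC: "norm z \<le> C"
  shows "Qf nu A y P W B x + quadQ nu A P W 0 (z - x) \<le> Qf nu A y P W B z"
proof -
  have "Qf nu A y P W B z = Qf nu A y P W (B + 0) (x + (z - x))" by simp
  also have "\<dots> = Qf nu A y P W B x + linQ nu A y P W B x 0 (z - x) + quadQ nu A P W 0 (z - x)"
    by (rule Qf_expand)
  finally show ?thesis using x_opt_lin[OF opt xC zC] by simp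
qed

definition thr_ok :: "real \<Rightarrow> complex \<Rightarrow> complex \<Rightarrow> bool" where
  "thr_ok eta a c \<longleftrightarrow> (c = 0 \<and> cmod a \<le> eta) \<or> (c = a \<and> cmod a \<ge> eta)"

lemma hard_thr_ok: "thr_ok eta (a$i) ((hard_thr eta a)$i)"
  by (simp add: thr_ok_def hard_thr_def)

lemma thr_entry:
  assumes "eta > 0" "thr_ok eta a c"
  shows "(cmod (a - c))\<^sup>2 + eta\<^sup>2 * (if c \<noteq> 0 then 1 else 0) \<le> (cmod (a - b))\<^sup>2 + eta\<^sup>2 * (if b \<noteq> 0 then 1 else 0)"
proof (cases "c = 0 \<and> cmod a \<le> eta")
  case True
  show ?thesis
  proof (cases "b = 0")
    case False
    have "(cmod a)\<^sup>2 \<le> eta\<^sup>2" using True assms(1) by (simp add: power_mono)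
    thus ?thesis using True False by (simp add: add_increasing)
  qed (use True in simp)
next
  case False
  hence c: "c = a" "cmod a \<ge> eta" using assms(2) by (auto simp: thr_ok_def)
  hence a0: "a \<noteq> 0" using assms(1) by auto
  show ?thesis
  proof (cases "b = 0")
    case True
    have "eta\<^sup>2 \<le> (cmod a)\<^sup>2" using c assms(1) by (simp add: power_mono)
    thus ?thesis using True c a0 by simp
  qed (use c a0 in simp)
qed

lemma l0_sum: "real (l0 b) = (\<Sum>i\<in>UNIV. if b$i \<noteq> 0 then 1 else 0)"
proof -
  have "(\<Sum>i\<in>UNIV. (if b$i \<noteq> 0 then 1 else 0::real)) = (\<Sum>i\<in>{i\<in>UNIV. b$i \<noteq> 0}. 1)"
    by (rule sum.inter_filter[symmetric]) simp
  thus ?thesis by (simp add: l0_def)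
qed

lemma norm_sq_vec: "(norm (x::complex^'n))\<^sup>2 = (\<Sum>i\<in>UNIV. (cmod (x$i))\<^sup>2)"
  by (simp add: norm_vec_def L2_set_def sum_nonneg)

lemma thr_vec:
  assumes "eta > 0" "\<forall>i. thr_ok eta (a$i) (c$i)"
  shows "(norm (a - c))\<^sup>2 + eta\<^sup>2 * real (l0 c) \<le> (norm (a - b))\<^sup>2 + eta\<^sup>2 * real (l0 (b::complex^'n))"
proof -
  have "(norm (a - c))\<^sup>2 + eta\<^sup>2 * real (l0 c) = (\<Sum>i\<in>UNIV. (cmod (a$i - c$i))\<^sup>2 + eta\<^sup>2 * (if c$i \<noteq> 0 then 1 else 0))"
    by (simp add: norm_sq_vec l0_sum sum.distrib sum_distrib_left)
  also have "\<dots> \<le> (\<Sum>i\<in>UNIV. (cmod (a$i - b$i))\<^sup>2 + eta\<^sup>2 * (if b$i \<noteq> 0 then 1 else 0))"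
    by (rule sum_mono, rule thr_entry) (use assms in auto)
  also have "\<dots> = (norm (a - b))\<^sup>2 + eta\<^sup>2 * real (l0 b)"
    by (simp add: norm_sq_vec l0_sum sum.distrib sum_distrib_left)
  finally show ?thesis .
qed

lemma local_entry:
  assumes "eta > 0" "thr_ok eta a b" "cmod d < eta / 2"
  shows "0 \<le> - 2 * inner (a - b) d + eta\<^sup>2 * ((if b + d \<noteq> 0 then 1 else 0) - (if b \<noteq> 0 then 1 else 0))"
proof (cases "b = 0 \<and> cmod a \<le> eta")
  case True
  show ?thesis
  proof (cases "d = 0")
    case False
    have "inner a d \<le> cmod a * cmod d" by (rule norm_cauchy_schwarz)
    also have "\<dots> \<le> eta * (eta / 2)" using True assms by (intro mult_mono) auto
    finally have "2 * inner a d \<le> eta\<^sup>2" by (simp add: power2_eq_square)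
    thus ?thesis using True False by simp
  qed (use True in simp)
next
  case False
  hence c: "b = a" "cmod a \<ge> eta" using assms(2) by (auto simp: thr_ok_def)
  have "cmod (b + d) \<ge> cmod b - cmod d" by (metis norm_diff_ineq norm_minus_cancel diff_minus_eq_add)
  hence "b + d \<noteq> 0" using c assms by auto
  moreover have "b \<noteq> 0" using c assms(1) by auto
  ultimately show ?thesis using c by simp
qed

lemma Lf_sum: "Lf B = (\<Sum>j\<in>UNIV. \<Sum>i\<in>UNIV. if B$i$j \<noteq> 0 then 1 else 0)"
  by (simp add: Lf_def l0_sum col_def)

lemma linQ_split: "linQ nu A y P W B x dB dx = linQ nu A y P W B x 0 dx
   - (\<Sum>j\<in>UNIV. 2 * inner (W *v (P j *v x) - col B j) (col dB j))"
proof -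
  have [simp]: "col 0 j = 0" for j by (simp add: col_def vec_eq_iff)
  show ?thesis by (simp add: linQ_def inner_diff_right sum_subtractf sum.distrib right_diff_distrib)
qed

lemma Bx_local:
  assumes eta: "eta > 0" and nu: "nu \<ge> 0"
    and thr: "\<forall>i j. thr_ok eta ((W *v (P j *v x))$i) (B$i$j)"
    and xopt: "\<forall>x'. norm x' \<le> C \<longrightarrow> Qf nu A y P W B x \<le> Qf nu A y P W B x'"
    and xC: "norm x \<le> C"
    and dB: "\<forall>i j. cmod (dB$i$j) < eta / 2" and xdC: "norm (x + dx) \<le> C"
  shows "Qf nu A y P W B x + eta\<^sup>2 * Lf B \<le> Qf nu A y P W (B + dB) (x + dx) + eta\<^sup>2 * Lf (B + dB)"
proof -
  have l0: "0 \<le> linQ nu A y P W B x 0 dx"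
    using x_opt_lin[OF xopt xC xdC] by simp
  have ent: "0 \<le> - (\<Sum>j\<in>UNIV. 2 * inner (W *v (P j *v x) - col B j) (col dB j))
       + eta\<^sup>2 * (Lf (B + dB) - Lf B)"
  proof -
    have "- (\<Sum>j\<in>UNIV. 2 * inner (W *v (P j *v x) - col B j) (col dB j))
       + eta\<^sup>2 * (Lf (B + dB) - Lf B)
      = (\<Sum>j\<in>UNIV. \<Sum>i\<in>UNIV. - 2 * inner ((W *v (P j *v x))$i - B$i$j) (dB$i$j)
          + eta\<^sup>2 * ((if B$i$j + dB$i$j \<noteq> 0 then 1 else 0) - (if B$i$j \<noteq> 0 then 1 else 0)))"
      by (simp add: Lf_sum inner_vec_def col_def sum.distrib sum_distrib_left sum_subtractf
          sum_negf right_diff_distrib)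
    also have "\<dots> \<ge> 0"
      by (intro sum_nonneg local_entry) (use eta thr dB in auto)
    finally show ?thesis by simp
  qed
  have "Qf nu A y P W (B + dB) (x + dx) = Qf nu A y P W B x + linQ nu A y P W B x dB dx + quadQ nu A P W dB dx"
    by (rule Qf_expand)
  moreover have "quadQ nu A P W dB dx \<ge> 0" using nu by (rule quadQ_nonneg)
  ultimately show ?thesis using l0 ent linQ_split[of nu A y P W B x dB dx] by (simp add: algebra_simps)
qed


lemma norm_le_sum_vec: "norm (x::'a::real_normed_vector^'n) \<le> (\<Sum>i\<in>UNIV. norm (x$i))"
  by (simp add: norm_vec_def L2_set_le_sum)

lemma mv_bound: fixes M :: "complex^'c^'r"
  shows "norm (M *v v) \<le> real CARD('r) * real CARD('c) * norm M * norm v"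
proof -
  have "norm (M *v v) \<le> (\<Sum>i\<in>(UNIV::'r set). norm ((M *v v)$i))" by (rule norm_le_sum_vec)
  also have "\<dots> \<le> (\<Sum>i\<in>(UNIV::'r set). real CARD('c) * norm M * norm v)"
  proof (rule sum_mono)
    fix i
    have "norm ((M *v v)$i) \<le> (\<Sum>k\<in>UNIV. norm (M$i$k * v$k))"
      unfolding matrix_vector_mult_def by (simp add: norm_sum)
    also have "\<dots> \<le> (\<Sum>k\<in>(UNIV::'c set). norm M * norm v)"
    proof (rule sum_mono)
      fix k
      have "norm (M$i$k) \<le> norm (M$i)" by (rule Finite_Cartesian_Product.norm_nth_le)
      also have "\<dots> \<le> norm M" by (rule Finite_Cartesian_Product.norm_nth_le)
      finally have "norm (M$i$k) \<le> norm M" .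
      moreover have "norm (v$k) \<le> norm v" by (rule Finite_Cartesian_Product.norm_nth_le)
      ultimately show "norm (M$i$k * v$k) \<le> norm M * norm v"
        by (simp add: norm_mult mult_mono)
    qed
    finally show "norm ((M *v v)$i) \<le> real CARD('c) * norm M * norm v" by simp
  qed
  finally show ?thesis by simp
qed

lemma norm_col: "norm (col (D::complex^'c^'r) j) \<le> real CARD('r) * norm D"
proof -
  have "norm (col D j) \<le> (\<Sum>i\<in>(UNIV::'r set). norm ((col D j)$i))" by (rule norm_le_sum_vec)
  also have "\<dots> \<le> (\<Sum>i\<in>(UNIV::'r set). norm D)"
  proof (rule sum_mono)
    fix i
    have "norm (D$i$j) \<le> norm (D$i)" by (rule Finite_Cartesian_Product.norm_nth_le)
    also have "\<dots> \<le> norm D" by (rule Finite_Cartesian_Product.norm_nth_le)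
    finally show "norm ((col D j)$i) \<le> norm D" by (simp add: col_def)
  qed
  finally show ?thesis by simp
qed


lemma pert_j:
  fixes M :: "complex^'n^'n" and Pj :: "complex^'p^'n" and B B' :: "complex^'N^'n"
  assumes M: "norm M \<le> r" and x: "norm (x' - x) \<le> r" and B: "norm (B' - B) \<le> r"
    and r1: "r \<le> 1" and r0: "0 \<le> r"
  shows "inner (M *v (Pj *v x')) (col B' j) - inner (M *v (Pj *v x)) (col B j)
     \<ge> - (r\<^sup>2 * (real CARD('n) * real CARD('n) * (real CARD('n) * real CARD('p)) * norm Pj * (norm (col B j) + real CARD('n))
           + real CARD('n) * real CARD('n) * norm (Pj *v x) * real CARD('n)))"
proof -
  define k1 where "k1 = real CARD('n) * real CARD('n)"
  define k2 where "k2 = real CARD('n) * real CARD('p)"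
  define k3 where "k3 = real CARD('n)"
  have k: "k1 \<ge> 0" "k2 \<ge> 0" "k3 \<ge> 0" by (simp_all add: k1_def k2_def k3_def)
  define w where "w = Pj *v (x' - x)"
  define d where "d = col (B' - B) j"
  have e1: "M *v (Pj *v x') = M *v (Pj *v x) + M *v w"
    by (simp add: w_def matrix_vector_mult_diff_distrib matrix_vector_right_distrib[symmetric])
  have e2: "col B' j = col B j + d" by (simp add: d_def col_diff)
  have diff: "inner (M *v (Pj *v x')) (col B' j) - inner (M *v (Pj *v x)) (col B j)
      = inner (M *v w) (col B' j) + inner (M *v (Pj *v x)) d"
    unfolding e1 e2 by (simp add: inner_add_left inner_add_right)
  have nw: "norm w \<le> k2 * norm Pj * r"
    using mv_bound[of Pj "x' - x"] x unfolding w_def k2_def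
    by (meson mult_left_mono mult_nonneg_nonneg norm_ge_zero of_nat_0_le_iff order_trans)
  have nMw: "norm (M *v w) \<le> k1 * r * (k2 * norm Pj * r)"
  proof -
    have "norm (M *v w) \<le> k1 * norm M * norm w" using mv_bound[of M w] by (simp add: k1_def)
    also have "\<dots> \<le> k1 * r * (k2 * norm Pj * r)"
      using M nw k r0 by (intro mult_mono) (auto intro: mult_nonneg_nonneg)
    finally show ?thesis .
  qed
  have nd: "norm d \<le> k3 * r"
    using norm_col[of "B' - B" j] B k unfolding d_def k3_def by (meson mult_left_mono of_nat_0_le_iff order_trans)
  have nb: "norm (col B' j) \<le> norm (col B j) + k3"
  proof -
    have "norm (col B' j) \<le> norm (col B j) + norm d" unfolding e2 by (rule norm_triangle_ineq)
    also have "norm d \<le> k3" using nd r1 k by (meson mult_left_le order_trans)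
    finally show ?thesis by simp
  qed
  have t1: "\<bar>inner (M *v w) (col B' j)\<bar> \<le> r\<^sup>2 * (k1 * k2 * norm Pj * (norm (col B j) + k3))"
  proof -
    have "\<bar>inner (M *v w) (col B' j)\<bar> \<le> norm (M *v w) * norm (col B' j)" by (rule Cauchy_Schwarz_ineq2)
    also have "\<dots> \<le> (k1 * r * (k2 * norm Pj * r)) * (norm (col B j) + k3)"
      using nMw nb k r0 by (intro mult_mono) auto
    also have "\<dots> = r\<^sup>2 * (k1 * k2 * norm Pj * (norm (col B j) + k3))" by (simp add: power2_eq_square mult_ac)
    finally show ?thesis .
  qed
  have t2: "\<bar>inner (M *v (Pj *v x)) d\<bar> \<le> r\<^sup>2 * (k1 * norm (Pj *v x) * k3)"
  proof -
    have "\<bar>inner (M *v (Pj *v x)) d\<bar> \<le> norm (M *v (Pj *v x)) * norm d" by (rule Cauchy_Schwarz_ineq2)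
    also have "\<dots> \<le> (k1 * r * norm (Pj *v x)) * (k3 * r)"
    proof (intro mult_mono)
      have "norm (M *v (Pj *v x)) \<le> k1 * norm M * norm (Pj *v x)" using mv_bound[of M] by (simp add: k1_def)
      also have "\<dots> \<le> k1 * r * norm (Pj *v x)" using M k r0 by (intro mult_mono mult_left_mono) auto
      finally show "norm (M *v (Pj *v x)) \<le> k1 * r * norm (Pj *v x)" .
    qed (use nd k r0 in auto)
    also have "\<dots> = r\<^sup>2 * (k1 * norm (Pj *v x) * k3)" by (simp add: power2_eq_square mult_ac)
    finally show ?thesis .
  qed
  show ?thesis using diff t1 t2 unfolding k1_def k2_def k3_def by (simp add: algebra_simps)
qed


definition Kj :: "('N::finite \<Rightarrow> complex^'p^'n) \<Rightarrow> complex^'N^'n \<Rightarrow> complex^'p \<Rightarrow> 'N \<Rightarrow> real" where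
  "Kj P B x j = real CARD('n) * real CARD('n) * (real CARD('n) * real CARD('p)) * norm (P j) * (norm (col B j) + real CARD('n))
           + real CARD('n) * real CARD('n) * norm (P j *v x) * real CARD('n)"

lemma Qf_Wdiff:
  fixes W W' :: "complex^'n^'n"
  assumes "adj W ** W = mat 1" "adj W' ** W' = mat 1"
  shows "Qf nu A y P W' B x - Qf nu A y P W B x = 2 * (\<Sum>j\<in>UNIV. inner ((W - W') *v (P j *v x)) (col B j))"
proof -
  have "(norm (W' *v (P j *v x) - col B j))\<^sup>2 - (norm (W *v (P j *v x) - col B j))\<^sup>2
     = 2 * inner ((W - W') *v (P j *v x)) (col B j)" for j
    by (simp add: norm_diff_sq norm_unitary[OF assms(1)] norm_unitary[OF assms(2)]
        matrix_vector_mult_diff_rdistrib inner_diff_left algebra_simps)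
  thus ?thesis by (simp add: Qf_def sum_subtractf[symmetric] sum_distrib_left)
qed

lemma W_pert:
  fixes W W' :: "complex^'n^'n" and B B' :: "complex^'N::finite^'n"
  assumes Wu: "adj W ** W = mat 1"
    and Wopt: "\<forall>W''. adj W'' ** W'' = mat 1 \<longrightarrow> Qf nu A y P W B x \<le> Qf nu A y P W'' B x"
    and W'u: "adj W' ** W' = mat 1" and dW: "norm (W' - W) \<le> r" and dB: "norm (B' - B) \<le> r"
    and dx: "norm (x' - x) \<le> r" and r1: "r \<le> 1" and r0: "0 \<le> r"
  shows "Qf nu A y P W B' x' - r\<^sup>2 * (2 * (\<Sum>j\<in>UNIV. Kj P B x j)) \<le> Qf nu A y P W' B' x'"
proof -
  define M where "M = W - W'"
  have nM: "norm M \<le> r" using dW by (simp add: M_def norm_minus_commute)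
  have "0 \<le> Qf nu A y P W' B x - Qf nu A y P W B x" using Wopt W'u by simp
  hence s0: "0 \<le> (\<Sum>j\<in>UNIV. inner (M *v (P j *v x)) (col B j))"
    by (simp add: Qf_Wdiff[OF Wu W'u] M_def)
  have "(\<Sum>j\<in>UNIV. - (r\<^sup>2 * Kj P B x j)) \<le>
        (\<Sum>j\<in>UNIV. inner (M *v (P j *v x')) (col B' j) - inner (M *v (P j *v x)) (col B j))"
    by (rule sum_mono) (unfold Kj_def, rule pert_j[OF nM dx dB r1 r0])
  hence "- (r\<^sup>2 * (\<Sum>j\<in>UNIV. Kj P B x j)) \<le> (\<Sum>j\<in>UNIV. inner (M *v (P j *v x')) (col B' j))
      - (\<Sum>j\<in>UNIV. inner (M *v (P j *v x)) (col B j))"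
    by (simp add: sum_subtractf sum_negf sum_distrib_left)
  hence "- (r\<^sup>2 * (\<Sum>j\<in>UNIV. Kj P B x j)) \<le> (\<Sum>j\<in>UNIV. inner (M *v (P j *v x')) (col B' j))"
    using s0 by linarith
  moreover have "Qf nu A y P W' B' x' - Qf nu A y P W B' x' = 2 * (\<Sum>j\<in>UNIV. inner (M *v (P j *v x')) (col B' j))"
    by (simp add: Qf_Wdiff[OF Wu W'u] M_def)
  ultimately show ?thesis by linarith
qed


lemma entry_le_norm: "cmod (D$i$j) \<le> norm (D::complex^'c^'r)"
proof -
  have "norm (D$i$j) \<le> norm (D$i)" by (rule Finite_Cartesian_Product.norm_nth_le)
  also have "\<dots> \<le> norm D" by (rule Finite_Cartesian_Product.norm_nth_le)
  finally show ?thesis by simp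
qed

lemma Kj_nonneg: "0 \<le> Kj P B x j"
  by (simp add: Kj_def)

lemma B_opt:
  assumes eta: "eta > 0" and thr: "\<forall>i j. thr_ok eta ((W *v (P j *v x))$i) (B$i$j)"
  shows "Qf nu A y P W B x + eta\<^sup>2 * Lf B \<le> Qf nu A y P W B' x + eta\<^sup>2 * Lf B'"
proof -
  have "(\<Sum>j\<in>UNIV. (norm (W *v (P j *v x) - col B j))\<^sup>2 + eta\<^sup>2 * real (l0 (col B j)))
     \<le> (\<Sum>j\<in>UNIV. (norm (W *v (P j *v x) - col B' j))\<^sup>2 + eta\<^sup>2 * real (l0 (col B' j)))"
    by (rule sum_mono, rule thr_vec[OF eta]) (use thr in \<open>auto simp: col_def\<close>)
  thus ?thesis by (simp add: Qf_def Lf_def sum.distrib sum_distrib_left)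
qed

lemma good_point_intro:
  fixes W :: "complex^'n^'n" and B :: "complex^'N::finite^'n" and x :: "complex^'p"
    and P :: "'N \<Rightarrow> complex^'p^'n"
  assumes eta: "eta > 0" and nu: "nu \<ge> 0" and Wu: "adj W ** W = mat 1" and xC: "norm x \<le> C"
    and thr: "\<forall>i j. thr_ok eta ((W *v (P j *v x))$i) (B$i$j)"
    and xopt: "\<forall>x'. norm x' \<le> C \<longrightarrow> Qf nu A y P W B x \<le> Qf nu A y P W B x'"
    and Wopt: "\<forall>W''. adj W'' ** W'' = mat 1 \<longrightarrow> Qf nu A y P W B x \<le> Qf nu A y P W'' B x"
  shows "(W, B, x) \<in> good_points nu eta C A y P"
proof -
  define G where "G = Qf nu A y P W B x + eta\<^sup>2 * Lf B"
  have gq: "gobj nu eta C A y P W B x = ereal G" by (simp add: gobj_eq G_def Wu xC)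
  define f where "f = (\<lambda>(W', B', x'). gobj nu eta C A y P W' B' x')"
  define K where "K = 2 * (\<Sum>j\<in>UNIV. Kj P B x j)"
  have K0: "0 \<le> K" by (simp add: K_def sum_nonneg Kj_nonneg)
  have loc: "Qf nu A y P W B x + eta\<^sup>2 * Lf B \<le> Qf nu A y P W (B + dB) (x + dx) + eta\<^sup>2 * Lf (B + dB)"
    if "\<forall>i j. cmod (dB$i$j) < eta / 2" "norm (x + dx) \<le> C" for dB dx
    by (rule Bx_local[OF eta nu thr xopt xC that])
  have frech: "0 \<in> frechet_subdiff f (W, B, x)"
    unfolding frechet_subdiff_def
  proof (intro CollectI conjI allI impI)
    show "\<bar>f (W, B, x)\<bar> \<noteq> \<infinity>" by (simp add: f_def gq)
    fix e :: real assume e: "e > 0"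
    define d where "d = min (min (eta / 2) 1) (e / (K + 1))"
    have d0: "d > 0" using e eta K0 by (simp add: d_def)
    show "\<exists>d>0. \<forall>u. norm (u - (W, B, x)) < d \<longrightarrow>
        f (W, B, x) + ereal (inner 0 (u - (W, B, x)) - e * norm (u - (W, B, x))) \<le> f u"
    proof (intro exI[of _ d] conjI allI impI d0)
      fix u assume u: "norm (u - (W, B, x)) < d"
      obtain W' B' x' where uu: "u = (W', B', x')" by (cases u) auto
      define r where "r = norm (u - (W, B, x))"
      have r0: "0 \<le> r" by (simp add: r_def)
      have ud: "u - (W, B, x) = (W' - W, B' - B, x' - x)" by (simp add: uu)
      have nW: "norm (W' - W) \<le> r" unfolding r_def ud by (rule norm_fst_le)
      have nB: "norm (B' - B) \<le> r" unfolding r_def ud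
        by (meson norm_fst_le norm_snd_le order_trans)
      have nx: "norm (x' - x) \<le> r" unfolding r_def ud
        by (meson norm_snd_le order_trans)
      have rd: "r < d" using u by (simp add: r_def)
      show "f (W, B, x) + ereal (inner 0 (u - (W, B, x)) - e * norm (u - (W, B, x))) \<le> f u"
      proof (cases "adj W' ** W' = mat 1 \<and> norm x' \<le> C")
        case False
        have "f u = \<infinity>" using False by (simp add: f_def uu gobj_eq)
        thus ?thesis by simp
      next
        case True
        have r1: "r \<le> 1" using rd by (simp add: d_def)
        have dBe: "\<forall>i j. cmod ((B' - B)$i$j) < eta / 2"
          using entry_le_norm[of "B' - B"] nB rd by (smt (verit) d_def min.bounded_iff)
        have "Qf nu A y P W B' x' - r\<^sup>2 * K \<le> Qf nu A y P W' B' x'"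
          unfolding K_def by (rule W_pert[OF Wu Wopt _ nW nB nx r1 r0]) (use True in simp)
        moreover have "G \<le> Qf nu A y P W B' x' + eta\<^sup>2 * Lf B'"
          using loc[OF dBe, of "x' - x"] True by (simp add: G_def)
        moreover have "r\<^sup>2 * K \<le> e * r"
        proof -
          have "r * K \<le> e"
          proof -
            have "r * K \<le> (e / (K + 1)) * K" using rd K0 by (intro mult_right_mono) (auto simp: d_def)
            also have "\<dots> \<le> e" using e K0 by (simp add: field_simps)
            finally show ?thesis .
          qed
          thus ?thesis using r0 by (simp add: power2_eq_square mult_left_mono mult.assoc mult.commute[of e])
        qed
        ultimately have "G - e * r \<le> Qf nu A y P W' B' x' + eta\<^sup>2 * Lf B'" by linarith
        thus ?thesis using True Wu xC by (simp add: f_def uu gobj_eq G_def r_def ud)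
      qed
    qed
  qed
  have crit: "critical_point f (W, B, x)"
    unfolding critical_point_def limiting_subdiff_def
  proof (intro CollectI conjI)
    show "\<bar>f (W, B, x)\<bar> \<noteq> \<infinity>" by (simp add: f_def gq)
    show "\<exists>zs vs. zs \<longlonglongrightarrow> (W, B, x) \<and> (\<lambda>k. f (zs k)) \<longlonglongrightarrow> f (W, B, x) \<and>
        (\<forall>k. vs k \<in> frechet_subdiff f (zs k)) \<and> vs \<longlonglongrightarrow> 0"
      by (rule exI[of _ "\<lambda>k. (W, B, x)"], rule exI[of _ "\<lambda>k. 0"]) (use frech in auto)
  qed
  show ?thesis unfolding good_points_def
  proof (intro CollectI case_prodI conjI allI impI)
    show "critical_point (\<lambda>(W', B', x'). gobj nu eta C A y P W' B' x') (W, B, x)"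
      using crit by (simp add: f_def)
    fix W' show "gobj nu eta C A y P W B x \<le> gobj nu eta C A y P W' B x"
      using Wopt by (simp add: gq gobj_eq G_def xC Wu)
  next
    fix B' show "gobj nu eta C A y P W B x \<le> gobj nu eta C A y P W B' x"
      using B_opt[OF eta thr] by (simp add: gq gobj_eq G_def xC Wu)
  next
    fix x' show "gobj nu eta C A y P W B x \<le> gobj nu eta C A y P W B x'"
      using xopt by (simp add: gq gobj_eq G_def Wu xC add_right_mono)
  next
    fix dB :: "complex^'N^'n" and dx :: "complex^'p"
    assume dB: "\<forall>i j. cmod (dB$i$j) < eta / 2"
    show "gobj nu eta C A y P W B x \<le> gobj nu eta C A y P W (B + dB) (x + dx)"
    proof (cases "norm (x + dx) \<le> C")
      case True thus ?thesis using loc[OF dB True] by (simp add: gq gobj_eq G_def Wu xC)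
    qed (simp add: gobj_eq)
  qed
qed


lemma tendsto_mv:
  fixes Mk :: "'a \<Rightarrow> complex^'c^'r"
  assumes "(Mk \<longlongrightarrow> M) F" "(vk \<longlongrightarrow> v) F"
  shows "((\<lambda>k. Mk k *v vk k) \<longlongrightarrow> M *v v) F"
proof (rule vec_tendstoI)
  fix i
  show "((\<lambda>k. (Mk k *v vk k)$i) \<longlongrightarrow> (M *v v)$i) F"
    unfolding matrix_vector_mult_def vec_lambda_beta
    by (intro tendsto_intros assms)
qed

lemma tendsto_mm:
  fixes Ak :: "'a \<Rightarrow> complex^'c^'r"
  assumes "(Ak \<longlongrightarrow> A) F" "(Bk \<longlongrightarrow> B) F"
  shows "((\<lambda>k. Ak k ** Bk k) \<longlongrightarrow> A ** B) F"
proof (rule vec_tendstoI, rule vec_tendstoI)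
  fix i j
  show "((\<lambda>k. (Ak k ** Bk k)$i$j) \<longlongrightarrow> (A ** B)$i$j) F"
    unfolding matrix_matrix_mult_def vec_lambda_beta
    by (intro tendsto_intros assms)
qed

lemma tendsto_adj:
  fixes Ak :: "'a \<Rightarrow> complex^'c^'r"
  assumes "(Ak \<longlongrightarrow> A) F"
  shows "((\<lambda>k. adj (Ak k)) \<longlongrightarrow> adj A) F"
proof (rule vec_tendstoI, rule vec_tendstoI)
  fix i j
  show "((\<lambda>k. adj (Ak k)$i$j) \<longlongrightarrow> adj A$i$j) F"
    unfolding adj_def vec_lambda_beta
    by (intro tendsto_intros assms)
qed

lemma tendsto_col:
  assumes "(Bk \<longlongrightarrow> B) F"
  shows "((\<lambda>k. col (Bk k) j) \<longlongrightarrow> col B j) F"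
proof (rule vec_tendstoI)
  fix i
  show "((\<lambda>k. col (Bk k) j $ i) \<longlongrightarrow> col B j $ i) F"
    unfolding col_def vec_lambda_beta by (intro tendsto_intros assms)
qed

lemma tendsto_Qf:
  assumes "(Wk \<longlongrightarrow> W) F" "(Bk \<longlongrightarrow> B) F" "(xk \<longlongrightarrow> x) F"
  shows "((\<lambda>k. Qf nu A y P (Wk k) (Bk k) (xk k)) \<longlongrightarrow> Qf nu A y P W B x) F"
  unfolding Qf_def
  by (intro tendsto_intros tendsto_mv tendsto_col assms)

lemma unitary_limit:
  fixes Wk :: "nat \<Rightarrow> complex^'n^'n"
  assumes "Wk \<longlonglongrightarrow> W" "\<forall>k. adj (Wk k) ** Wk k = mat 1"
  shows "adj W ** W = mat 1"
proof -
  have "(\<lambda>k. adj (Wk k) ** Wk k) \<longlonglongrightarrow> adj W ** W"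
    by (intro tendsto_mm tendsto_adj assms(1))
  moreover have "(\<lambda>k. adj (Wk k) ** Wk k) = (\<lambda>k. mat 1)" using assms(2) by simp
  ultimately show ?thesis using LIMSEQ_unique tendsto_const by metis
qed

lemma thr_limit:
  assumes eta: "eta > 0" and a: "ak \<longlonglongrightarrow> a" and b: "bk \<longlonglongrightarrow> b"
    and thr: "\<forall>k. thr_ok eta (ak k) (bk k)"
  shows "thr_ok eta a b"
proof (cases "b = 0")
  case True
  have "cmod a \<le> eta"
  proof (rule ccontr)
    assume "\<not> cmod a \<le> eta"
    hence "cmod a > eta" by simp
    hence "eventually (\<lambda>k. cmod (ak k) > eta) sequentially"
      using order_tendstoD(1)[OF tendsto_norm[OF a]] by blast
    moreover have "eventually (\<lambda>k. cmod (bk k) < eta) sequentially"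
      using tendsto_norm[OF b] True eta by (intro order_tendstoD(2)) auto
    ultimately have "eventually (\<lambda>k. False) sequentially"
    proof eventually_elim
      case (elim k)
      thus False using thr[rule_format, of k] by (auto simp: thr_ok_def)
    qed
    thus False by simp
  qed
  thus ?thesis using True by (simp add: thr_ok_def)
next
  case False
  have "eventually (\<lambda>k. bk k \<noteq> 0) sequentially"
    using b False by (rule tendsto_imp_eventually_ne)
  hence ev: "eventually (\<lambda>k. bk k = ak k \<and> cmod (ak k) \<ge> eta) sequentially"
    by eventually_elim (use thr in \<open>auto simp: thr_ok_def\<close>)
  have "eventually (\<lambda>k. bk k = ak k) sequentially" using ev by (rule eventually_mono) simp
  hence "(\<lambda>k. ak k) \<longlonglongrightarrow> b" by (rule Lim_transform_eventually[OF b])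
  hence ab: "a = b" using a LIMSEQ_unique by blast
  have "cmod a \<ge> eta"
    using a ev by (intro tendsto_lowerbound[OF tendsto_norm]) (auto elim: eventually_mono)
  thus ?thesis using ab by (simp add: thr_ok_def)
qed

lemma support_stable:
  assumes eta: "eta > 0" and b: "bk \<longlonglongrightarrow> b"
    and gap: "\<forall>k. bk k = 0 \<or> cmod (bk k) \<ge> eta"
  shows "eventually (\<lambda>k. (bk k \<noteq> 0) = (b \<noteq> 0)) sequentially"
proof (cases "b = 0")
  case True
  have "eventually (\<lambda>k. cmod (bk k) < eta) sequentially"
    using tendsto_norm[OF b] True eta by (intro order_tendstoD(2)) auto
  thus ?thesis
  proof eventually_elim
    case (elim k) thus ?case using gap[rule_format, of k] True by auto
  qed
next
  case False
  show ?thesis using tendsto_imp_eventually_ne[OF b False] by (rule eventually_mono) (simp add: False)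
qed


context
  fixes nu eta C :: real and A :: "complex^'p^'m" and y :: "complex^'m"
    and P :: "'N::finite \<Rightarrow> complex^'p^'n"
    and Ws :: "nat \<Rightarrow> complex^'n^'n" and Bs :: "nat \<Rightarrow> complex^'N^'n"
    and xs :: "nat \<Rightarrow> complex^'p"
  assumes nu: "nu > 0" and eta: "eta > 0" and alg: "alg_A1 nu eta C A y P Ws Bs xs"
begin

lemma step_W: "adj (Ws (Suc t)) ** Ws (Suc t) = mat 1"
  and step_Wopt: "\<forall>W'. adj W' ** W' = mat 1 \<longrightarrow>
      Qf nu A y P (Ws (Suc t)) (Bs t) (xs t) \<le> Qf nu A y P W' (Bs t) (xs t)"
proof -
  obtain U S V where svd: "full_svd (patch_mat P (xs t) ** adj (Bs t)) U S V" and W: "Ws (Suc t) = V ** adj U"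
    using alg unfolding alg_A1_def by blast
  show "adj (Ws (Suc t)) ** Ws (Suc t) = mat 1" using svd W
    by (auto simp: full_svd_def intro!: unitary_mult adj_unitary)
  show "\<forall>W'. adj W' ** W' = mat 1 \<longrightarrow>
      Qf nu A y P (Ws (Suc t)) (Bs t) (xs t) \<le> Qf nu A y P W' (Bs t) (xs t)"
    using procrustes(1)[OF svd] W by (simp add: Qf_def)
qed

lemma step_thr: "\<forall>i j. thr_ok eta ((Ws (Suc t) *v (P j *v xs t))$i) (Bs (Suc t)$i$j)"
proof (intro allI)
  fix i j
  have "col (Bs (Suc t)) j = hard_thr eta (Ws (Suc t) *v (P j *v xs t))"
    using alg unfolding alg_A1_def by blast
  hence "Bs (Suc t)$i$j = (hard_thr eta (Ws (Suc t) *v (P j *v xs t)))$i"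
    by (metis col_def vec_lambda_beta)
  thus "thr_ok eta ((Ws (Suc t) *v (P j *v xs t))$i) (Bs (Suc t)$i$j)" by (simp add: hard_thr_ok)
qed

lemma step_xC: "norm (xs (Suc t)) \<le> C"
  using alg unfolding alg_A1_def by blast

lemma step_xopt: "\<forall>x'. norm x' \<le> C \<longrightarrow>
   Qf nu A y P (Ws (Suc t)) (Bs (Suc t)) (xs (Suc t)) \<le> Qf nu A y P (Ws (Suc t)) (Bs (Suc t)) x'"
  using alg unfolding alg_A1_def Qf_def by blast

definition G :: "nat \<Rightarrow> real" where
  "G t = Qf nu A y P (Ws t) (Bs t) (xs t) + eta\<^sup>2 * Lf (Bs t)"
definition H :: "nat \<Rightarrow> real" where
  "H t = Qf nu A y P (Ws (Suc t)) (Bs t) (xs t) + eta\<^sup>2 * Lf (Bs t)"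
definition R :: "nat \<Rightarrow> real" where
  "R t = quadQ nu A P (Ws (Suc t)) 0 (xs t - xs (Suc t))"

lemma G_nonneg: "0 \<le> G t"
  using nu by (simp add: G_def Qf_def Lf_def sum_nonneg)

lemma R_nonneg: "0 \<le> R t"
  using nu by (simp add: R_def quadQ_nonneg)

lemma H_le_G: "H (Suc t) \<le> G (Suc t)"
  using step_Wopt[of "Suc t"] step_W[of t] by (simp add: H_def G_def)

lemma G_R_le_H: "G (Suc (Suc t)) + R (Suc t) \<le> H (Suc t)"
proof -
  have "Qf nu A y P (Ws (Suc (Suc t))) (Bs (Suc (Suc t))) (xs (Suc t)) + eta\<^sup>2 * Lf (Bs (Suc (Suc t)))
      \<le> H (Suc t)"
    unfolding H_def by (rule B_opt[OF eta step_thr])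
  moreover have "Qf nu A y P (Ws (Suc (Suc t))) (Bs (Suc (Suc t))) (xs (Suc (Suc t))) + R (Suc t)
      \<le> Qf nu A y P (Ws (Suc (Suc t))) (Bs (Suc (Suc t))) (xs (Suc t))"
    unfolding R_def by (rule x_opt_quad[OF step_xopt step_xC step_xC])
  ultimately show ?thesis by (simp add: G_def)
qed

lemma R_ge: "(norm (P j *v xs (Suc t) - P j *v xs t))\<^sup>2 \<le> R t"
proof -
  have c0: "col (0::complex^'N^'n) j = 0" for j by (simp add: col_def vec_eq_iff)
  have "(norm (P j *v xs (Suc t) - P j *v xs t))\<^sup>2 = (norm (Ws (Suc t) *v (P j *v (xs t - xs (Suc t))) - col 0 j))\<^sup>2"
  proof -
    have "norm (Ws (Suc t) *v (P j *v (xs t - xs (Suc t))) - col 0 j) = norm (P j *v (xs t - xs (Suc t)))"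
      by (simp add: c0 norm_unitary[OF step_W])
    also have "\<dots> = norm (P j *v xs (Suc t) - P j *v xs t)"
      by (simp add: matrix_vector_mult_diff_distrib norm_minus_commute)
    finally show ?thesis by simp
  qed
  also have "\<dots> \<le> (\<Sum>j\<in>UNIV. (norm (Ws (Suc t) *v (P j *v (xs t - xs (Suc t))) - col 0 j))\<^sup>2)"
    by (rule member_le_sum) auto
  also have "\<dots> \<le> R t" using nu by (simp add: R_def quadQ_def)
  finally show ?thesis .
qed

lemma G_conv: obtains Gs where "(\<lambda>n. G (Suc n)) \<longlonglongrightarrow> Gs"
proof -
  have "decseq (\<lambda>n. G (Suc n))"
    unfolding decseq_Suc_iff
  proof
    fix n show "G (Suc (Suc n)) \<le> G (Suc n)" using H_le_G[of n] G_R_le_H[of n] R_nonneg[of "Suc n"] by linarith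
  qed
  moreover have "\<forall>i. 0 \<le> G (Suc i)" by (simp add: G_nonneg)
  ultimately obtain L where "(\<lambda>n. G (Suc n)) \<longlonglongrightarrow> L" by (rule decseq_convergent)
  thus ?thesis using that by blast
qed

lemma diff_to_0: "(\<lambda>n. P j *v xs (Suc n) - P j *v xs n) \<longlonglongrightarrow> 0"
proof -
  obtain Gs where Gs: "(\<lambda>n. G (Suc n)) \<longlonglongrightarrow> Gs" by (rule G_conv)
  have "(\<lambda>n. G (Suc n) - G (Suc (Suc n))) \<longlonglongrightarrow> Gs - Gs"
    by (intro tendsto_diff Gs LIMSEQ_Suc[OF Gs])
  hence l0: "(\<lambda>n. G (Suc n) - G (Suc (Suc n))) \<longlonglongrightarrow> 0" by simp
  have le: "R (Suc n) \<le> G (Suc n) - G (Suc (Suc n))" for n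
    using G_R_le_H[of n] H_le_G[of n] by linarith
  have "(\<lambda>n. R (Suc n)) \<longlonglongrightarrow> 0"
    by (rule tendsto_sandwich[OF _ _ tendsto_const l0]) (auto intro!: always_eventually R_nonneg le)
  hence sq: "(\<lambda>n. sqrt (R (Suc n))) \<longlonglongrightarrow> 0" using tendsto_real_sqrt by fastforce
  have e1: "\<forall>n. 0 \<le> norm (P j *v xs (Suc (Suc n)) - P j *v xs (Suc n))" by simp
  have e2: "\<forall>n. norm (P j *v xs (Suc (Suc n)) - P j *v xs (Suc n)) \<le> sqrt (R (Suc n))"
    using R_ge by (simp add: real_le_rsqrt)
  have "(\<lambda>n. norm (P j *v xs (Suc (Suc n)) - P j *v xs (Suc n))) \<longlonglongrightarrow> 0"
    by (rule tendsto_sandwich[OF always_eventually[OF e1] always_eventually[OF e2] tendsto_const sq])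
  hence "(\<lambda>n. P j *v xs (Suc (Suc n)) - P j *v xs (Suc n)) \<longlonglongrightarrow> 0"
    by (simp add: tendsto_norm_zero_iff)
  thus ?thesis by (rule LIMSEQ_imp_Suc)
qed

lemma accum:
  assumes r: "strict_mono r" and lim: "((\<lambda>t. (Ws t, Bs t, xs t)) \<circ> r) \<longlonglongrightarrow> (Wq, Bq, xq)"
  shows "(Wq, Bq, xq) \<in> good_points nu eta C A y P"
proof -
  define tk where "tk k = r (Suc k) - 1" for k
  have rS: "r (Suc k) = Suc (tk k)" for k
    using seq_suble[OF r, of "Suc k"] by (simp add: tk_def)
  have tkm: "strict_mono tk"
    unfolding strict_mono_Suc_iff
  proof
    fix k show "tk k < tk (Suc k)"
      using r rS[of k] rS[of "Suc k"] unfolding strict_mono_def by (metis Suc_less_eq lessI)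
  qed
  have lim2: "(\<lambda>k. (Ws (Suc (tk k)), Bs (Suc (tk k)), xs (Suc (tk k)))) \<longlonglongrightarrow> (Wq, Bq, xq)"
    using LIMSEQ_Suc[OF lim] by (simp add: o_def rS)
  have WK: "(\<lambda>k. Ws (Suc (tk k))) \<longlonglongrightarrow> Wq" using tendsto_fst[OF lim2] by simp
  have BK: "(\<lambda>k. Bs (Suc (tk k))) \<longlonglongrightarrow> Bq" using tendsto_fst[OF tendsto_snd[OF lim2]] by simp
  have XK: "(\<lambda>k. xs (Suc (tk k))) \<longlonglongrightarrow> xq" using tendsto_snd[OF tendsto_snd[OF lim2]] by simp
  have PX: "(\<lambda>k. P j *v xs (tk k)) \<longlonglongrightarrow> P j *v xq" for j
  proof -
    have d: "(\<lambda>k. P j *v xs (Suc (tk k)) - P j *v xs (tk k)) \<longlonglongrightarrow> 0"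
      using LIMSEQ_subseq_LIMSEQ[OF diff_to_0 tkm] by (simp add: o_def)
    have "(\<lambda>k. P j *v xs (Suc (tk k)) - (P j *v xs (Suc (tk k)) - P j *v xs (tk k))) \<longlonglongrightarrow> P j *v xq - 0"
      by (intro tendsto_diff d tendsto_mv tendsto_const XK)
    thus ?thesis by simp
  qed
  have Wu: "adj Wq ** Wq = mat 1"
    by (rule unitary_limit[OF WK]) (simp add: step_W)
  have xC: "norm xq \<le> C"
    by (rule Lim_norm_ubound[OF _ XK]) (auto simp: step_xC)
  have thr: "\<forall>i j. thr_ok eta ((Wq *v (P j *v xq))$i) (Bq$i$j)"
  proof (intro allI)
    fix i j
    show "thr_ok eta ((Wq *v (P j *v xq))$i) (Bq$i$j)"
    proof (rule thr_limit[OF eta])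
      show "(\<lambda>k. (Ws (Suc (tk k)) *v (P j *v xs (tk k)))$i) \<longlonglongrightarrow> (Wq *v (P j *v xq))$i"
        by (intro tendsto_vec_nth tendsto_mv WK PX)
      show "(\<lambda>k. Bs (Suc (tk k))$i$j) \<longlonglongrightarrow> Bq$i$j"
        by (intro tendsto_vec_nth BK)
      show "\<forall>k. thr_ok eta ((Ws (Suc (tk k)) *v (P j *v xs (tk k)))$i) (Bs (Suc (tk k))$i$j)"
        using step_thr by blast
    qed
  qed
  have QK: "(\<lambda>k. Qf nu A y P (Ws (Suc (tk k))) (Bs (Suc (tk k))) (xs (Suc (tk k)))) \<longlonglongrightarrow> Qf nu A y P Wq Bq xq"
    by (intro tendsto_Qf WK BK XK)
  have xopt: "\<forall>x'. norm x' \<le> C \<longrightarrow> Qf nu A y P Wq Bq xq \<le> Qf nu A y P Wq Bq x'"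
  proof (intro allI impI)
    fix x' :: "complex^'p" assume x': "norm x' \<le> C"
    show "Qf nu A y P Wq Bq xq \<le> Qf nu A y P Wq Bq x'"
      by (rule tendsto_le[OF _ tendsto_Qf[OF WK BK tendsto_const] QK])
         (use step_xopt x' in auto)
  qed
  obtain Gs where Gs: "(\<lambda>n. G (Suc n)) \<longlonglongrightarrow> Gs" by (rule G_conv)
  have G1: "(\<lambda>k. G (Suc (tk k))) \<longlonglongrightarrow> Gs"
    using LIMSEQ_subseq_LIMSEQ[OF Gs tkm] by (simp add: o_def)
  have G2: "(\<lambda>k. G (Suc (Suc (tk k)))) \<longlonglongrightarrow> Gs"
    using LIMSEQ_subseq_LIMSEQ[OF LIMSEQ_Suc[OF Gs] tkm] by (simp add: o_def)
  have HK: "(\<lambda>k. H (Suc (tk k))) \<longlonglongrightarrow> Gs"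
  proof (rule tendsto_sandwich[OF _ _ G2 G1])
    show "\<forall>\<^sub>F k in sequentially. G (Suc (Suc (tk k))) \<le> H (Suc (tk k))"
      using G_R_le_H R_nonneg by (intro always_eventually) (smt (verit))
    show "\<forall>\<^sub>F k in sequentially. H (Suc (tk k)) \<le> G (Suc (tk k))"
      using H_le_G by (intro always_eventually) blast
  qed
  have gapB: "\<forall>k. Bs (Suc (tk k))$i$j = 0 \<or> cmod (Bs (Suc (tk k))$i$j) \<ge> eta" for i j
  proof
    fix k
    have "thr_ok eta ((Ws (Suc (tk k)) *v (P j *v xs (tk k)))$i) (Bs (Suc (tk k))$i$j)"
      using step_thr by blast
    thus "Bs (Suc (tk k))$i$j = 0 \<or> cmod (Bs (Suc (tk k))$i$j) \<ge> eta" by (auto simp: thr_ok_def)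
  qed
  have evL: "eventually (\<lambda>k. Lf (Bs (Suc (tk k))) = Lf Bq) sequentially"
  proof -
    have "eventually (\<lambda>k. \<forall>i. \<forall>j. (Bs (Suc (tk k))$i$j \<noteq> 0) = (Bq$i$j \<noteq> 0)) sequentially"
    proof (intro eventually_all_finite)
      fix i j
      show "eventually (\<lambda>k. (Bs (Suc (tk k))$i$j \<noteq> 0) = (Bq$i$j \<noteq> 0)) sequentially"
        by (rule support_stable[OF eta _ gapB]) (intro tendsto_vec_nth BK)
    qed
    thus ?thesis by (rule eventually_mono) (simp add: Lf_sum)
  qed
  have "(\<lambda>k. G (Suc (tk k))) \<longlonglongrightarrow> Qf nu A y P Wq Bq xq + eta\<^sup>2 * Lf Bq"
  proof -
    have "(\<lambda>k. Qf nu A y P (Ws (Suc (tk k))) (Bs (Suc (tk k))) (xs (Suc (tk k))) + eta\<^sup>2 * Lf Bq)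
        \<longlonglongrightarrow> Qf nu A y P Wq Bq xq + eta\<^sup>2 * Lf Bq"
      by (intro tendsto_add QK tendsto_const)
    moreover have "eventually (\<lambda>k. Qf nu A y P (Ws (Suc (tk k))) (Bs (Suc (tk k))) (xs (Suc (tk k))) + eta\<^sup>2 * Lf Bq
        = G (Suc (tk k))) sequentially"
      using evL by (rule eventually_mono) (simp add: G_def)
    ultimately show ?thesis by (rule Lim_transform_eventually)
  qed
  hence GsV: "Gs = Qf nu A y P Wq Bq xq + eta\<^sup>2 * Lf Bq" using G1 LIMSEQ_unique by blast
  have QH: "(\<lambda>k. Qf nu A y P (Ws (Suc (Suc (tk k)))) (Bs (Suc (tk k))) (xs (Suc (tk k)))) \<longlonglongrightarrow> Qf nu A y P Wq Bq xq"
  proof -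
    have "(\<lambda>k. H (Suc (tk k)) - eta\<^sup>2 * Lf Bq) \<longlonglongrightarrow> Gs - eta\<^sup>2 * Lf Bq"
      by (intro tendsto_diff HK tendsto_const)
    moreover have "eventually (\<lambda>k. H (Suc (tk k)) - eta\<^sup>2 * Lf Bq =
        Qf nu A y P (Ws (Suc (Suc (tk k)))) (Bs (Suc (tk k))) (xs (Suc (tk k)))) sequentially"
      using evL by (rule eventually_mono) (simp add: H_def)
    ultimately show ?thesis using GsV by (simp add: Lim_transform_eventually)
  qed
  have Wopt: "\<forall>W''. adj W'' ** W'' = mat 1 \<longrightarrow> Qf nu A y P Wq Bq xq \<le> Qf nu A y P W'' Bq xq"
  proof (intro allI impI)
    fix W'' :: "complex^'n^'n" assume W'': "adj W'' ** W'' = mat 1"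
    show "Qf nu A y P Wq Bq xq \<le> Qf nu A y P W'' Bq xq"
      by (rule tendsto_le[OF _ tendsto_Qf[OF tendsto_const BK XK] QH])
         (use step_Wopt W'' in auto)
  qed
  show ?thesis
    by (rule good_point_intro[OF eta _ Wu xC thr xopt Wopt]) (use nu in simp)
qed

lemma bounded_seq: "bounded (range (\<lambda>t. (Ws t, Bs t, xs t)))"
proof -
  define KW where "KW = real CARD('n) * real CARD('n)"
  define KB where "KB = (\<Sum>i\<in>(UNIV::'n set). \<Sum>j\<in>UNIV. real CARD('n) * real CARD('p) * norm (P j) * C)"
  have bW: "norm (Ws (Suc t)) \<le> KW" for t
  proof -
    have "norm (Ws (Suc t)) \<le> (\<Sum>i\<in>UNIV. norm (Ws (Suc t)$i))" by (rule norm_le_sum_vec)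
    also have "\<dots> \<le> (\<Sum>i\<in>(UNIV::'n set). \<Sum>k\<in>(UNIV::'n set). norm (Ws (Suc t)$i$k))"
      by (intro sum_mono norm_le_sum_vec)
    also have "\<dots> \<le> (\<Sum>i\<in>(UNIV::'n set). \<Sum>k\<in>(UNIV::'n set). 1)"
      by (intro sum_mono unitary_entry_le1'[OF step_W])
    finally show ?thesis by (simp add: KW_def)
  qed
  have bB: "norm (Bs (Suc (Suc t))) \<le> KB" for t
  proof -
    have "norm (Bs (Suc (Suc t))) \<le> (\<Sum>i\<in>UNIV. norm (Bs (Suc (Suc t))$i))" by (rule norm_le_sum_vec)
    also have "\<dots> \<le> (\<Sum>i\<in>(UNIV::'n set). \<Sum>j\<in>UNIV. norm (Bs (Suc (Suc t))$i$j))"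
      by (intro sum_mono norm_le_sum_vec)
    also have "\<dots> \<le> (\<Sum>i\<in>(UNIV::'n set). \<Sum>j\<in>UNIV. real CARD('n) * real CARD('p) * norm (P j) * C)"
    proof (intro sum_mono)
      fix i j
      let ?a = "Ws (Suc (Suc t)) *v (P j *v xs (Suc t))"
      have "thr_ok eta (?a$i) (Bs (Suc (Suc t))$i$j)" using step_thr by blast
      hence "norm (Bs (Suc (Suc t))$i$j) \<le> norm (?a$i)" by (auto simp: thr_ok_def)
      also have "\<dots> \<le> norm ?a" by (rule Finite_Cartesian_Product.norm_nth_le)
      also have "\<dots> = norm (P j *v xs (Suc t))" by (rule norm_unitary[OF step_W])
      also have "\<dots> \<le> real CARD('n) * real CARD('p) * norm (P j) * norm (xs (Suc t))" by (rule mv_bound)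
      also have "\<dots> \<le> real CARD('n) * real CARD('p) * norm (P j) * C"
        using step_xC by (intro mult_left_mono) auto
      finally show "norm (Bs (Suc (Suc t))$i$j) \<le> real CARD('n) * real CARD('p) * norm (P j) * C" .
    qed
    finally show ?thesis by (simp add: KB_def)
  qed
  have nz: "norm (Ws t, Bs t, xs t) \<le> norm (Ws t) + norm (Bs t) + norm (xs t)" for t
    using norm_Pair_le[of "Ws t" "(Bs t, xs t)"] norm_Pair_le[of "Bs t" "xs t"] by simp
  define a where "a = max (max (norm (Ws 0, Bs 0, xs 0)) (norm (Ws 1, Bs 1, xs 1))) (KW + KB + C)"
  have "norm (Ws t, Bs t, xs t) \<le> a" for t
  proof (cases t)
    case 0 thus ?thesis by (simp add: a_def)
  next
    case (Suc s) note s = this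
    show ?thesis
    proof (cases s)
      case 0 thus ?thesis using s by (simp add: a_def)
    next
      case (Suc u)
      have "norm (Ws t, Bs t, xs t) \<le> KW + KB + C"
        using nz[of t] bW[of "Suc u"] bB[of u] step_xC[of "Suc u"] s Suc by simp
      thus ?thesis by (simp add: a_def)
    qed
  qed
  thus ?thesis unfolding bounded_iff by blast
qed

end


theorem corollary2:
  fixes A :: "complex^'p^'m" and y :: "complex^'m"
    and P :: "'N::finite \<Rightarrow> complex^'p^'n"
    and nu eta C :: real
    and Ws :: "nat \<Rightarrow> complex^'n^'n" and Bs :: "nat \<Rightarrow> complex^'N^'n"
    and xs :: "nat \<Rightarrow> complex^'p"
  assumes "nu > 0" and "eta > 0" and "C > 0"
    and "\<forall>j. patch_op (P j)"
    and "alg_A1 nu eta C A y P Ws Bs xs"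
  shows "(\<exists>q r. strict_mono r \<and> ((\<lambda>t. (Ws t, Bs t, xs t)) \<circ> r) \<longlonglongrightarrow> q)
    \<and> (\<forall>q r. strict_mono r \<and> ((\<lambda>t. (Ws t, Bs t, xs t)) \<circ> r) \<longlonglongrightarrow> q
            \<longrightarrow> q \<in> good_points nu eta C A y P)
    \<and> (\<lambda>t. infdist (Ws t, Bs t, xs t) (good_points nu eta C A y P)) \<longlonglongrightarrow> 0"
proof -
  define z where "z = (\<lambda>t. (Ws t, Bs t, xs t))"
  define S where "S = good_points nu eta C A y P"
  have bd: "bounded (range z)" unfolding z_def by (rule bounded_seq[OF assms(1,2,5)])
  have p1: "\<exists>q r. strict_mono r \<and> (z \<circ> r) \<longlonglongrightarrow> q"
    using bounded_imp_convergent_subsequence[OF bd] by blast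
  have p2: "\<forall>q r. strict_mono r \<and> (z \<circ> r) \<longlonglongrightarrow> q \<longrightarrow> q \<in> S"
  proof (intro allI impI)
    fix q r assume h: "strict_mono r \<and> (z \<circ> r) \<longlonglongrightarrow> q"
    obtain Wq Bq xq where q: "q = (Wq, Bq, xq)" by (cases q) auto
    show "q \<in> S" unfolding S_def q
      by (rule accum[OF assms(1,2,5)]) (use h q z_def in auto)
  qed
  have p3: "(\<lambda>t. infdist (z t) S) \<longlonglongrightarrow> 0"
  proof (rule ccontr)
    assume "\<not> (\<lambda>t. infdist (z t) S) \<longlonglongrightarrow> 0"
    then obtain e where e: "e > 0" and fr: "\<forall>N. \<exists>n\<ge>N. infdist (z n) S \<ge> e"
      unfolding LIMSEQ_iff by (auto simp: not_less infdist_nonneg)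
    then obtain g where g: "\<forall>N. g N \<ge> N \<and> infdist (z (g N)) S \<ge> e" by metis
    define h where "h = rec_nat (g 0) (\<lambda>_ m. g (Suc m))"
    have h0: "h 0 = g 0" and hS: "h (Suc k) = g (Suc (h k))" for k by (simp_all add: h_def)
    have hm: "strict_mono h"
      unfolding strict_mono_Suc_iff using g hS by (metis Suc_le_lessD)
    have he: "infdist (z (h k)) S \<ge> e" for k
      by (cases k) (use g h0 hS in auto)
    have "bounded (range (z \<circ> h))" by (rule bounded_subset[OF bd]) auto
    then obtain q r2 where r2: "strict_mono r2" and lim: "((z \<circ> h) \<circ> r2) \<longlonglongrightarrow> q"
      using bounded_imp_convergent_subsequence by blast
    have "(z \<circ> (h \<circ> r2)) \<longlonglongrightarrow> q" using lim by (simp add: o_assoc)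
    hence "q \<in> S" using p2 strict_mono_o[OF hm r2] by blast
    hence "\<forall>k. infdist (((z \<circ> h) \<circ> r2) k) S \<le> dist (((z \<circ> h) \<circ> r2) k) q"
      by (simp add: infdist_le)
    moreover have "eventually (\<lambda>k. dist (((z \<circ> h) \<circ> r2) k) q < e) sequentially"
      using lim e by (rule tendstoD)
    ultimately have "eventually (\<lambda>k. False) sequentially"
      by (smt (verit, ccfv_SIG) comp_apply eventually_mono he)
    thus False by simp
  qed
  show ?thesis using p1 p2 p3 unfolding z_def S_def by blast
qed

end
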